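(* Fix an integer $d\geq 2$, let $f_n$ be a sequence with $f_n\to\infty$, and set $r_n=f_n\left(\frac{\log n}{n}\right)^{1/d}$. Let $\mathcal{G}_n=\mathcal{G}(\mathcal{X}_n;r_n)$. Let $q,q'\in[0,1]^d$ satisfy $q\preceq_\delta q'$ for some $\delta>0$ independent of $n$. Then almost surely there exist $X,X'\in\mathcal{X}_n$ such that (i) $\|X-q\|_2\leq r_n/2$ and $\|X'-q'\|_2\leq r_n/2$; (ii) $q\preceq X$ and $X'\preceq q'$; (iii) $X$ and $X'$ are connected in $\mathcal{G}_n$ by a monotone path.
   Context: Logarithms are natural. For $p=(p_1,\dots,p_d),p'=(p'_1,\dots,p'_d)\in\mathbb{R}^d$, $p\preceq p'$ means $p_i\leq p'_i$ for all $i$; for $\delta>0$, $p\preceq_\delta p'$ means $p\preceq p'$ and $\min_i(p'_i-p_i)=\delta$. $\mathcal{X}_n$ consists of $n$ points drawn independently and uniformly at random from $[0,1]^d$. $\mathcal{G}(V;r)$ is the directed graph with vertex set $V$ and edges $(x,y)$ for all $x\neq y\in V$ with $\|x-y\|_2\leq r$. A path in this graph is monotone if every traversed edge $(x,y)$ satisfies $x\preceq y$. An event holds almost surely (a.s.) if its probability tends to $1$ as $n\to\infty$. *)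

theory Defs
  imports "HOL-Probability.Probability"
begin

definition vle :: "real ^ 'd \<Rightarrow> real ^ 'd \<Rightarrow> bool" where
  "vle p p' \<longleftrightarrow> (\<forall>i. p $ i \<le> p' $ i)"

definition vle_delta :: "real \<Rightarrow> real ^ 'd \<Rightarrow> real ^ 'd \<Rightarrow> bool" where
  "vle_delta \<delta> p p' \<longleftrightarrow> vle p p' \<and> Min (range (\<lambda>i. p' $ i - p $ i)) = \<delta>"

definition unit_cube :: "(real ^ 'd) set" where
  "unit_cube = {x. \<forall>i. 0 \<le> x $ i \<and> x $ i \<le> 1}"

definition sample :: "nat \<Rightarrow> (nat \<Rightarrow> real ^ 'd) measure" where
  "sample n = PiM {..<n} (\<lambda>_. uniform_measure lborel unit_cube)"

text \<open>A monotone path in the directed graph G(V;r), given as its vertex list: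
  consecutive vertices are distinct elements of V at distance at most r,
  and each traversed edge (x,y) satisfies x \<preceq> y.\<close>
definition monotone_path :: "(real ^ 'd) set \<Rightarrow> real \<Rightarrow> (real ^ 'd) list \<Rightarrow> bool" where
  "monotone_path V r xs \<longleftrightarrow> xs \<noteq> [] \<and> set xs \<subseteq> V \<and>
     (\<forall>i < length xs - 1. xs ! i \<noteq> xs ! Suc i \<and> dist (xs ! i) (xs ! Suc i) \<le> r
        \<and> vle (xs ! i) (xs ! Suc i))"

definition monotone_connected :: "(real ^ 'd) set \<Rightarrow> real \<Rightarrow> real ^ 'd \<Rightarrow> real ^ 'd \<Rightarrow> bool" where
  "monotone_connected V r x y \<longleftrightarrow>
     (\<exists>xs. monotone_path V r xs \<and> hd xs = x \<and> last xs = y)"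

end

theory Submission imports Defs begin

lemma cube_eq: "(unit_cube :: (real^'d) set) = cbox 0 (\<chi> i. 1)"
  by (auto simp: unit_cube_def mem_box_cart)

lemma box_meas:
  assumes "s \<ge> 0"
  shows "measure lborel (cbox a (a + (\<chi> i. s)) :: (real^'d) set) = s ^ CARD('d)"
proof -
  have "a \<in> cbox a (a + (\<chi> i. s))" using assms by (auto simp: mem_box_cart)
  then have "cbox a (a + (\<chi> i. s)) \<noteq> {}" by blast
  then show ?thesis by (simp add: content_cbox_cart)
qed

lemma cube_emeas: "emeasure lborel (unit_cube :: (real^'d) set) = 1"
proof -
  have "measure lborel (unit_cube :: (real^'d) set) = 1"
    using box_meas[of 1 "0::real^'d"] by (simp add: cube_eq)
  then show ?thesis unfolding cube_eq by (simp add: emeasure_lborel_cbox_finite measure_def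
     emeasure_lborel_cbox_finite)
qed

lemma prob_M: "prob_space (uniform_measure lborel (unit_cube :: (real^'d) set))"
  by (rule prob_space_uniform_measure) (simp_all add: cube_emeas)

lemma prob_sample: "prob_space (sample n :: (nat \<Rightarrow> real^'d) measure)"
  unfolding sample_def by (rule prob_space_PiM) (rule prob_M)

lemma meas_M:
  assumes "B \<subseteq> unit_cube" "B \<in> sets lborel"
  shows "measure (uniform_measure lborel (unit_cube :: (real^'d) set)) B = measure lborel B"
proof -
  have "unit_cube \<in> sets (lborel :: (real^'d) measure)" by (simp add: cube_eq)
  moreover have "measure lborel (unit_cube :: (real^'d) set) = 1" using cube_emeas by (simp add: measure_def)
  moreover have "emeasure lborel (unit_cube :: (real^'d) set) \<noteq> 0"
     "emeasure lborel (unit_cube :: (real^'d) set) \<noteq> \<infinity>" using cube_emeas[where 'd='d] by simp_all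
  ultimately show ?thesis using assms 
    by (simp add: measure_uniform_measure Int_absorb1)
qed

lemma bad_prob:
  assumes "B \<subseteq> unit_cube" "B \<in> sets lborel"
  shows "measure (sample n :: (nat \<Rightarrow> real^'d) measure) {\<omega> \<in> space (sample n). \<forall>i<n. \<omega> i \<notin> B}
     = (1 - measure lborel B) ^ n"
proof -
  let ?M = "uniform_measure lborel (unit_cube :: (real^'d) set)"
  interpret M: prob_space ?M by (rule prob_M)
  interpret P: product_sigma_finite "\<lambda>_. ?M" by standard
  have eq: "{\<omega> \<in> space (sample n). \<forall>i<n. \<omega> i \<notin> B} = Pi\<^sub>E {..<n} (\<lambda>_. UNIV - B)"
    by (auto simp: sample_def space_PiM PiE_iff extensional_def)
  have le1: "measure lborel B \<le> 1" using M.prob_le_1[of B] meas_M[OF assms] by simp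
  have "emeasure (sample n) (Pi\<^sub>E {..<n} (\<lambda>_. UNIV - B)) = (\<Prod>i\<in>{..<n}. emeasure ?M (UNIV - B))"
    unfolding sample_def using assms by (intro P.emeasure_PiM) auto
  also have "emeasure ?M (UNIV - B) = ennreal (1 - measure lborel B)"
  proof -
    have "emeasure ?M (UNIV - B) = ennreal (measure ?M (UNIV - B))"
      by (simp add: M.emeasure_eq_measure)
    also have "measure ?M (UNIV - B) = 1 - measure ?M B"
      using M.prob_compl[of B] assms by (simp add: Compl_eq_Diff_UNIV)
    finally show ?thesis using meas_M[OF assms] by simp
  qed
  finally have "emeasure (sample n) (Pi\<^sub>E {..<n} (\<lambda>_. UNIV - B)) = ennreal ((1 - measure lborel B) ^ n)"
    using le1 by (simp add: ennreal_power)
  then show ?thesis unfolding eq using le1 by (intro measure_eq_emeasure_eq_ennreal) auto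
qed

definition cpt :: "real^'d \<Rightarrow> real^'d \<Rightarrow> real \<Rightarrow> nat \<Rightarrow> nat \<Rightarrow> real^'d" where
  "cpt q q' s K j = (\<chi> i. q$i + real j / real K * (q'$i - q$i - s))"

definition bx :: "real^'d \<Rightarrow> real^'d \<Rightarrow> real \<Rightarrow> nat \<Rightarrow> nat \<Rightarrow> (real^'d) set" where
  "bx q q' s K j = cbox (cpt q q' s K j) (cpt q q' s K j + (\<chi> i. s))"

lemma mem_bx: "x \<in> bx q q' s K j \<longleftrightarrow> (\<forall>i. q$i + real j / real K * (q'$i - q$i - s) \<le> x$i \<and>
    x$i \<le> q$i + real j / real K * (q'$i - q$i - s) + s)"
  by (simp add: bx_def cpt_def mem_box_cart)

lemma dist_bound:
  fixes x y :: "real^'d"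
  assumes "\<And>i. \<bar>x$i - y$i\<bar> \<le> t"
  shows "dist x y \<le> real CARD('d) * t"
proof -
  have "dist x y = norm (x - y)" by (simp add: dist_norm)
  also have "\<dots> \<le> (\<Sum>i\<in>UNIV. \<bar>(x - y)$i\<bar>)" by (rule norm_le_l1_cart)
  also have "\<dots> \<le> (\<Sum>i\<in>(UNIV::'d set). t)" using assms by (intro sum_mono) simp
  finally show ?thesis by simp
qed

lemma bx_cube:
  assumes "q \<in> unit_cube" "q' \<in> unit_cube" "\<And>i. q$i + s \<le> q'$i" "s \<ge> 0" "j \<le> K" "K > 0"
  shows "bx q q' s K j \<subseteq> unit_cube"
proof
  fix x assume x: "x \<in> bx q q' s K j"
  show "x \<in> unit_cube" unfolding unit_cube_def
  proof (intro CollectI allI conjI)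
    fix i
    have t: "0 \<le> real j / real K" "real j / real K \<le> 1" using assms by auto
    have v: "0 \<le> q'$i - q$i - s" using assms(3)[of i] by simp
    have "0 \<le> real j / real K * (q'$i - q$i - s)" using t v by simp
    moreover have "real j / real K * (q'$i - q$i - s) \<le> q'$i - q$i - s"
      using t v mult_right_mono[OF t(2) v] by simp
    moreover have "0 \<le> q$i" "q'$i \<le> 1" using assms(1,2) by (auto simp: unit_cube_def)
    ultimately show "0 \<le> x$i" "x$i \<le> 1" using x unfolding mem_bx by (smt (verit))+
  qed
qed

lemma bx_step:
  fixes q q' :: "real^'d"
  assumes "q \<in> unit_cube" "q' \<in> unit_cube" "\<And>i. s * (real K + 1) < q'$i - q$i" "s \<ge> 0"
    "j < K" "real CARD('d) * (1 / real K + s) \<le> r"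
    "x \<in> bx q q' s K j" "y \<in> bx q q' s K (Suc j)"
  shows "x \<noteq> y \<and> dist x y \<le> r \<and> vle x y"
proof -
  have K: "real K > 0" using assms(5) by simp
  have lo: "x$i < y$i" and hi: "\<bar>x$i - y$i\<bar> \<le> 1 / real K + s" for i
  proof -
    let ?v = "q'$i - q$i - s"
    have v: "s * real K < ?v" using assms(3)[of i] by (simp add: algebra_simps)
    have "0 \<le> q$i" "q'$i \<le> 1" using assms(1,2) by (auto simp: unit_cube_def)
    then have v1: "?v \<le> 1" using assms(4) by linarith
    have "real (Suc j) / real K * ?v = real j / real K * ?v + ?v / real K"
      using K by (simp add: field_simps)
    moreover have "s < ?v / real K" using v K by (simp add: field_simps)
    moreover have "?v / real K \<le> 1 / real K" using v1 K by (simp add: divide_right_mono)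
    moreover have "?v / real K \<ge> 0"
    proof -
      have "0 \<le> s * real K" using assms(4) by simp
      then show ?thesis using v K by simp
    qed
    ultimately show "x$i < y$i" "\<bar>x$i - y$i\<bar> \<le> 1 / real K + s"
      using assms(7,8) unfolding mem_bx by (smt (verit))+
  qed
  have "x \<noteq> y" using lo by blast
  moreover have "dist x y \<le> r"
    using dist_bound[of x y "1 / real K + s", OF hi] assms(6) by simp
  moreover have "vle x y" unfolding vle_def using lo less_imp_le by blast
  ultimately show ?thesis by blast
qed

lemma bx_first:
  fixes q q' :: "real^'d"
  assumes "x \<in> bx q q' s K 0" "s \<ge> 0"
  shows "vle q x \<and> dist x q \<le> real CARD('d) * s"
proof -
  have h: "\<And>i. q$i \<le> x$i \<and> x$i \<le> q$i + s" using assms unfolding mem_bx by simp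
  then have "\<And>i. \<bar>x$i - q$i\<bar> \<le> s" by (smt (verit))
  then show ?thesis using dist_bound[of x q s] h unfolding vle_def by auto
qed

lemma bx_last:
  fixes q q' :: "real^'d"
  assumes "x \<in> bx q q' s K K" "s \<ge> 0" "K > 0"
  shows "vle x q' \<and> dist x q' \<le> real CARD('d) * s"
proof -
  have "\<And>i. q'$i - s \<le> x$i \<and> x$i \<le> q'$i" using assms unfolding mem_bx by simp
  moreover from this have "\<And>i. \<bar>x$i - q'$i\<bar> \<le> s" by (smt (verit))
  ultimately show ?thesis using dist_bound[of x q' s] unfolding vle_def by auto
qed


lemma det_event:
  fixes q q' :: "real^'d" and \<omega> :: "nat \<Rightarrow> real^'d"
  assumes "q \<in> unit_cube" "q' \<in> unit_cube" "\<And>i. s * (real K + 1) < q'$i - q$i" "s \<ge> 0"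
    "K > 0" "real CARD('d) * (1 / real K + s) \<le> r" "real CARD('d) * s \<le> r / 2"
    "\<forall>j\<le>K. \<exists>i<n. \<omega> i \<in> bx q q' s K j"
  shows "\<exists>X \<in> \<omega> ` {..<n}. \<exists>X' \<in> \<omega> ` {..<n}.
                 dist X q \<le> r / 2 \<and> dist X' q' \<le> r / 2 \<and>
                 vle q X \<and> vle X' q' \<and>
                 monotone_connected (\<omega> ` {..<n}) r X X'"
proof -
  from assms(8) obtain g where g: "\<And>j. j \<le> K \<Longrightarrow> g j < n \<and> \<omega> (g j) \<in> bx q q' s K j"
    by metis
  define xs where "xs = map (\<lambda>j. \<omega> (g j)) [0..<Suc K]"
  have len: "length xs = Suc K" by (simp add: xs_def)
  have nth: "\<And>k. k \<le> K \<Longrightarrow> xs ! k = \<omega> (g k)" by (simp add: xs_def del: upt_Suc)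
  have ne: "xs \<noteq> []" using len by auto
  have hd: "hd xs = \<omega> (g 0)" using nth[of 0] hd_conv_nth[OF ne] by simp
  have lst: "last xs = \<omega> (g K)" using nth[of K] last_conv_nth[OF ne] len by simp
  have img: "\<And>j. j \<le> K \<Longrightarrow> \<omega> (g j) \<in> \<omega> ` {..<n}" using g by blast
  have "monotone_path (\<omega> ` {..<n}) r xs"
    unfolding monotone_path_def
  proof (intro conjI allI impI)
    show "xs \<noteq> []" using len by auto
    show "set xs \<subseteq> \<omega> ` {..<n}" using img by (auto simp: xs_def simp del: upt_Suc)
    fix k assume k: "k < length xs - 1"
    have st: "xs ! k \<noteq> xs ! Suc k \<and> dist (xs ! k) (xs ! Suc k) \<le> r \<and> vle (xs ! k) (xs ! Suc k)"
      using bx_step[OF assms(1-4) _ assms(6), of k] g[of k] g[of "Suc k"] k len nth[of k] nth[of "Suc k"]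
      by simp
    then show "xs ! k \<noteq> xs ! Suc k" "dist (xs ! k) (xs ! Suc k) \<le> r" "vle (xs ! k) (xs ! Suc k)"
      by auto
  qed
  then have mc: "monotone_connected (\<omega> ` {..<n}) r (\<omega> (g 0)) (\<omega> (g K))"
    unfolding monotone_connected_def using hd lst by blast
  have e0: "vle q (\<omega> (g 0)) \<and> dist (\<omega> (g 0)) q \<le> real CARD('d) * s"
    using bx_first[of "\<omega> (g 0)" q q' s K] assms(4) g[of 0] by simp
  have eK: "vle (\<omega> (g K)) q' \<and> dist (\<omega> (g K)) q' \<le> real CARD('d) * s"
    using bx_last[of "\<omega> (g K)" q q' s K] assms(4,5) g[of K] by simp
  have i0: "\<omega> (g 0) \<in> \<omega> ` {..<n}" and iK: "\<omega> (g K) \<in> \<omega> ` {..<n}" using img by auto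
  show ?thesis using mc e0 eK assms(7) by (intro bexI[OF _ i0] bexI[OF _ iK]) auto
qed

lemma comp_meas: assumes that: "j < n" shows "(\<lambda>\<omega>. \<omega> j) \<in> borel_measurable (sample n :: (nat \<Rightarrow> real^'d) measure)"
proof -
  let ?U = "uniform_measure lborel (unit_cube :: (real^'d) set)"
  have "(\<lambda>\<omega>. \<omega> j) \<in> measurable (PiM {..<n} (\<lambda>_. ?U)) ?U"
    by (rule measurable_component_singleton) (simp add: that)
  moreover have "measurable (PiM {..<n} (\<lambda>_. ?U)) ?U = measurable (PiM {..<n} (\<lambda>_. ?U)) borel"
    by (rule measurable_cong_sets) auto
  ultimately show ?thesis unfolding sample_def by simp
qed

lemma vec_comp_meas:
  fixes f :: "'a \<Rightarrow> real^'d"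
  assumes "f \<in> borel_measurable M"
  shows "(\<lambda>x. f x $ i) \<in> borel_measurable M"
proof -
  have "(\<lambda>v::real^'d. v $ i) \<in> borel_measurable borel"
    by (intro borel_measurable_continuous_onI continuous_intros)
  then show ?thesis using measurable_compose[OF assms] by blast
qed

lemma pred_gen:
  fixes f g :: "'a \<Rightarrow> real^'d"
  assumes f[measurable]: "f \<in> borel_measurable M" and g[measurable]: "g \<in> borel_measurable M"
  shows "Measurable.pred M (\<lambda>x. f x \<noteq> g x \<and> dist (f x) (g x) \<le> r \<and> vle (f x) (g x))"
    and "Measurable.pred M (\<lambda>x. dist (f x) c \<le> e)"
    and "Measurable.pred M (\<lambda>x. vle c (f x))"
    and "Measurable.pred M (\<lambda>x. vle (f x) c)"
proof -
  have [measurable]: "(\<lambda>x. f x $ i) \<in> borel_measurable M" for i by (rule vec_comp_meas[OF f])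
  have [measurable]: "(\<lambda>x. g x $ i) \<in> borel_measurable M" for i by (rule vec_comp_meas[OF g])
  have eq: "(\<lambda>x. f x \<noteq> g x \<and> dist (f x) (g x) \<le> r \<and> vle (f x) (g x))
     = (\<lambda>x. 0 < dist (f x) (g x) \<and> dist (f x) (g x) \<le> r \<and> (\<forall>i. f x $ i \<le> g x $ i))"
    by (auto simp: vle_def)
  show "Measurable.pred M (\<lambda>x. f x \<noteq> g x \<and> dist (f x) (g x) \<le> r \<and> vle (f x) (g x))"
    unfolding eq by measurable
  show "Measurable.pred M (\<lambda>x. dist (f x) c \<le> e)" by measurable
  show "Measurable.pred M (\<lambda>x. vle c (f x))" unfolding vle_def by measurable
  show "Measurable.pred M (\<lambda>x. vle (f x) c)" unfolding vle_def by measurable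
qed


definition edge :: "real \<Rightarrow> real^'d \<Rightarrow> real^'d \<Rightarrow> bool" where
  "edge r x y \<longleftrightarrow> x \<noteq> y \<and> dist x y \<le> r \<and> vle x y"

definition Psi :: "nat \<Rightarrow> real^'d \<Rightarrow> real^'d \<Rightarrow> real \<Rightarrow> nat list \<Rightarrow> (nat \<Rightarrow> real^'d) \<Rightarrow> bool" where
  "Psi n q q' r js \<omega> \<longleftrightarrow> js \<noteq> [] \<and> set js \<subseteq> {..<n} \<and>
     dist (\<omega> (hd js)) q \<le> r / 2 \<and> dist (\<omega> (last js)) q' \<le> r / 2 \<and>
     vle q (\<omega> (hd js)) \<and> vle (\<omega> (last js)) q' \<and>
     (\<forall>k. k < length js - 1 \<longrightarrow> edge r (\<omega> (js ! k)) (\<omega> (js ! Suc k)))"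

lemma event_iff:
  fixes q q' :: "real^'d" and \<omega> :: "nat \<Rightarrow> real^'d"
  shows "(\<exists>X \<in> \<omega> ` {..<n}. \<exists>X' \<in> \<omega> ` {..<n}.
                 dist X q \<le> r / 2 \<and> dist X' q' \<le> r / 2 \<and>
                 vle q X \<and> vle X' q' \<and>
                 monotone_connected (\<omega> ` {..<n}) r X X') \<longleftrightarrow> (\<exists>js. Psi n q q' r js \<omega>)"
proof
  assume "\<exists>X \<in> \<omega> ` {..<n}. \<exists>X' \<in> \<omega> ` {..<n}.
                 dist X q \<le> r / 2 \<and> dist X' q' \<le> r / 2 \<and>
                 vle q X \<and> vle X' q' \<and>
                 monotone_connected (\<omega> ` {..<n}) r X X'"
  then obtain X X' xs where XX: "dist X q \<le> r / 2" "dist X' q' \<le> r / 2" "vle q X" "vle X' q'"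
    and mp: "monotone_path (\<omega> ` {..<n}) r xs" and hx: "hd xs = X" "last xs = X'"
    unfolding monotone_connected_def by blast
  define idx where "idx x = (SOME i. i < n \<and> \<omega> i = x)" for x
  have idx: "idx x < n \<and> \<omega> (idx x) = x" if "x \<in> set xs" for x
  proof -
    have "\<exists>i. i < n \<and> \<omega> i = x" using mp that unfolding monotone_path_def by auto
    then show ?thesis unfolding idx_def by (rule someI_ex)
  qed
  define js where "js = map idx xs"
  have ne: "xs \<noteq> []" using mp unfolding monotone_path_def by auto
  have mapeq: "map \<omega> js = xs" unfolding js_def by (simp add: map_idI idx)
  have jsne: "js \<noteq> []" using ne by (simp add: js_def)
  have h1: "\<omega> (hd js) = X" using mapeq jsne hx by (metis hd_map)
  have h2: "\<omega> (last js) = X'" using mapeq jsne hx by (metis last_map)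
  have len: "length js = length xs" by (simp add: js_def)
  have nth: "\<omega> (js ! k) = xs ! k" if "k < length xs" for k
    using mapeq that len by (metis nth_map)
  have "Psi n q q' r js \<omega>"
    unfolding Psi_def
  proof (intro conjI allI impI)
    show "js \<noteq> []" by fact
    show "set js \<subseteq> {..<n}" using idx by (auto simp: js_def)
    show "dist (\<omega> (hd js)) q \<le> r / 2" "dist (\<omega> (last js)) q' \<le> r / 2"
      "vle q (\<omega> (hd js))" "vle (\<omega> (last js)) q'" using XX h1 h2 by auto
    fix k assume k: "k < length js - 1"
    then show "edge r (\<omega> (js ! k)) (\<omega> (js ! Suc k))"
      using mp len nth[of k] nth[of "Suc k"] unfolding monotone_path_def edge_def by auto
  qed
  then show "\<exists>js. Psi n q q' r js \<omega>" by blast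
next
  assume "\<exists>js. Psi n q q' r js \<omega>"
  then obtain js where P: "Psi n q q' r js \<omega>" by blast
  define xs where "xs = map \<omega> js"
  have ne: "js \<noteq> []" and sub: "set js \<subseteq> {..<n}" using P by (auto simp: Psi_def)
  have hdx: "hd xs = \<omega> (hd js)" using ne by (simp add: xs_def hd_map)
  have lsx: "last xs = \<omega> (last js)" using ne by (simp add: xs_def last_map)
  have i1: "\<omega> (hd js) \<in> \<omega> ` {..<n}" using ne sub by (meson hd_in_set image_eqI subsetD)
  have i2: "\<omega> (last js) \<in> \<omega> ` {..<n}" using ne sub by (meson last_in_set image_eqI subsetD)
  have "monotone_path (\<omega> ` {..<n}) r xs"
    unfolding monotone_path_def
  proof (intro conjI allI impI)
    show "xs \<noteq> []" using ne by (simp add: xs_def)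
    show "set xs \<subseteq> \<omega> ` {..<n}" using sub by (auto simp: xs_def)
    fix k assume k: "k < length xs - 1"
    then have "edge r (\<omega> (js ! k)) (\<omega> (js ! Suc k))" using P by (auto simp: Psi_def xs_def)
    then show "xs ! k \<noteq> xs ! Suc k" "dist (xs ! k) (xs ! Suc k) \<le> r" "vle (xs ! k) (xs ! Suc k)"
      using k by (auto simp: xs_def edge_def)
  qed
  then have "monotone_connected (\<omega> ` {..<n}) r (\<omega> (hd js)) (\<omega> (last js))"
    unfolding monotone_connected_def using hdx lsx by blast
  then show "\<exists>X \<in> \<omega> ` {..<n}. \<exists>X' \<in> \<omega> ` {..<n}.
                 dist X q \<le> r / 2 \<and> dist X' q' \<le> r / 2 \<and>
                 vle q X \<and> vle X' q' \<and>
                 monotone_connected (\<omega> ` {..<n}) r X X'"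
    using P i1 i2 unfolding Psi_def by blast
qed

lemma pred_Psi:
  fixes q q' :: "real^'d"
  shows "Measurable.pred (sample n :: (nat \<Rightarrow> real^'d) measure) (\<lambda>\<omega>. \<exists>js. Psi n q q' r js \<omega>)"
proof (rule pred_intros_countable(2))
  fix js :: "nat list"
  show "Measurable.pred (sample n) (\<lambda>\<omega>. Psi n q q' r js \<omega>)"
  proof (cases "js \<noteq> [] \<and> set js \<subseteq> {..<n}")
    case False
    then have "(\<lambda>\<omega>. Psi n q q' r js \<omega>) = (\<lambda>_. False)" by (auto simp: Psi_def)
    then show ?thesis by simp
  next
    case True
    have hd: "hd js < n" using True by (meson hd_in_set lessThan_iff subsetD)
    have lst: "last js < n" using True by (meson last_in_set lessThan_iff subsetD)
    have p1: "Measurable.pred (sample n :: (nat \<Rightarrow> real^'d) measure) (\<lambda>\<omega>. dist (\<omega> (hd js)) q \<le> r / 2)"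
      "Measurable.pred (sample n :: (nat \<Rightarrow> real^'d) measure) (\<lambda>\<omega>. vle q (\<omega> (hd js)))"
      using pred_gen(2)[OF comp_meas[OF hd] comp_meas[OF hd], of q "r/2"]
        pred_gen(3)[OF comp_meas[OF hd] comp_meas[OF hd], of q] by auto
    have p2: "Measurable.pred (sample n :: (nat \<Rightarrow> real^'d) measure) (\<lambda>\<omega>. dist (\<omega> (last js)) q' \<le> r / 2)"
      "Measurable.pred (sample n :: (nat \<Rightarrow> real^'d) measure) (\<lambda>\<omega>. vle (\<omega> (last js)) q')"
      using pred_gen(2)[OF comp_meas[OF lst] comp_meas[OF lst], of q' "r/2"]
        pred_gen(4)[OF comp_meas[OF lst] comp_meas[OF lst], of q'] by auto
    have pk: "Measurable.pred (sample n :: (nat \<Rightarrow> real^'d) measure)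
       (\<lambda>\<omega>. k < length js - 1 \<longrightarrow> edge r (\<omega> (js ! k)) (\<omega> (js ! Suc k)))" for k
    proof (cases "k < length js - 1")
      case True
      then have k1: "k < length js" "Suc k < length js" by arith+
      have "js ! k \<in> set js" "js ! Suc k \<in> set js" using k1 by (auto intro: nth_mem simp del: nth_mem)
      then have a: "js ! k < n" and b: "js ! Suc k < n" using \<open>js \<noteq> [] \<and> set js \<subseteq> {..<n}\<close> by auto
      have e: "Measurable.pred (sample n :: (nat \<Rightarrow> real^'d) measure)
          (\<lambda>\<omega>. edge r (\<omega> (js ! k)) (\<omega> (js ! Suc k)))"
        unfolding edge_def by (rule pred_gen(1)[OF comp_meas[OF a] comp_meas[OF b]])
      show ?thesis using True e by simp
    next
      case False
      then show ?thesis by simp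
    qed
    have eq: "(\<lambda>\<omega>. Psi n q q' r js \<omega>) = (\<lambda>\<omega>. dist (\<omega> (hd js)) q \<le> r / 2 \<and> dist (\<omega> (last js)) q' \<le> r / 2 \<and>
     vle q (\<omega> (hd js)) \<and> vle (\<omega> (last js)) q' \<and>
     (\<forall>k. k < length js - 1 \<longrightarrow> edge r (\<omega> (js ! k)) (\<omega> (js ! Suc k))))"
      using True by (auto simp: Psi_def)
    have c: "\<And>A B. Measurable.pred (sample n :: (nat \<Rightarrow> real^'d) measure) A \<Longrightarrow>
       Measurable.pred (sample n) B \<Longrightarrow> Measurable.pred (sample n) (\<lambda>x. A x \<and> B x)"
      using pred_intros_logic(3) by blast
    show ?thesis unfolding eq
      by (intro c pred_intros_countable(1) p1 p2 pk)
  qed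
qed


lemma bad_sets:
  assumes "B \<in> sets lborel"
  shows "{\<omega> \<in> space (sample n :: (nat \<Rightarrow> real^'d) measure). \<forall>i<n. \<omega> i \<notin> B} \<in> sets (sample n)"
proof -
  have eq: "{\<omega> \<in> space (sample n :: (nat \<Rightarrow> real^'d) measure). \<forall>i<n. \<omega> i \<notin> B} = Pi\<^sub>E {..<n} (\<lambda>_. UNIV - B)"
    by (auto simp: sample_def space_PiM PiE_iff extensional_def)
  show ?thesis unfolding eq unfolding sample_def using assms by (intro sets_PiM_I_finite) auto
qed

lemma prob_lower:
  fixes q q' :: "real^'d"
  assumes "q \<in> unit_cube" "q' \<in> unit_cube" "\<And>i. s * (real K + 1) < q'$i - q$i" "s \<ge> 0"
    "K > 0" "real CARD('d) * (1 / real K + s) \<le> r" "real CARD('d) * s \<le> r / 2"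
  shows "measure (sample n :: (nat \<Rightarrow> real ^ 'd) measure)
            {\<omega> \<in> space (sample n).
               \<exists>X \<in> \<omega> ` {..<n}. \<exists>X' \<in> \<omega> ` {..<n}.
                 dist X q \<le> r / 2 \<and> dist X' q' \<le> r / 2 \<and>
                 vle q X \<and> vle X' q' \<and>
                 monotone_connected (\<omega> ` {..<n}) r X X'}
         \<ge> 1 - (real K + 1) * (1 - s ^ CARD('d)) ^ n"
proof -
  let ?P = "sample n :: (nat \<Rightarrow> real ^ 'd) measure"
  interpret P: prob_space ?P by (rule prob_sample)
  let ?E = "{\<omega> \<in> space ?P.
               \<exists>X \<in> \<omega> ` {..<n}. \<exists>X' \<in> \<omega> ` {..<n}.
                 dist X q \<le> r / 2 \<and> dist X' q' \<le> r / 2 \<and>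
                 vle q X \<and> vle X' q' \<and>
                 monotone_connected (\<omega> ` {..<n}) r X X'}"
  define Bad where "Bad j = {\<omega> \<in> space ?P. \<forall>i<n. \<omega> i \<notin> bx q q' s K j}" for j
  have Esets: "?E \<in> sets ?P"
  proof -
    have "?E = {\<omega> \<in> space ?P. \<exists>js. Psi n q q' r js \<omega>}" by (simp only: event_iff)
    then show ?thesis using pred_Psi[of n q q' r] unfolding pred_def by simp
  qed
  have bxs: "bx q q' s K j \<in> sets lborel" for j by (simp add: bx_def)
  have Bsets: "Bad j \<in> sets ?P" for j unfolding Bad_def by (rule bad_sets[OF bxs])
  have sle: "\<And>i. q$i + s \<le> q'$i"
  proof -
    fix i have "s \<le> s * (real K + 1)" using assms(4) by (simp add: algebra_simps)
    then show "q$i + s \<le> q'$i" using assms(3)[of i] by simp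
  qed
  have mB: "measure ?P (Bad j) = (1 - s ^ CARD('d)) ^ n" if "j \<le> K" for j
  proof -
    have "measure ?P (Bad j) = (1 - measure lborel (bx q q' s K j)) ^ n"
      unfolding Bad_def by (rule bad_prob[OF bx_cube[OF assms(1,2) sle assms(4) that assms(5)] bxs])
    also have "measure lborel (bx q q' s K j) = s ^ CARD('d)"
      unfolding bx_def by (rule box_meas[OF assms(4)])
    finally show ?thesis .
  qed
  have sub: "space ?P - (\<Union>j\<in>{..K}. Bad j) \<subseteq> ?E"
  proof
    fix \<omega> assume w: "\<omega> \<in> space ?P - (\<Union>j\<in>{..K}. Bad j)"
    then have "\<forall>j\<le>K. \<exists>i<n. \<omega> i \<in> bx q q' s K j" unfolding Bad_def by auto
    then have d: "\<exists>X \<in> \<omega> ` {..<n}. \<exists>X' \<in> \<omega> ` {..<n}.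
                 dist X q \<le> r / 2 \<and> dist X' q' \<le> r / 2 \<and>
                 vle q X \<and> vle X' q' \<and>
                 monotone_connected (\<omega> ` {..<n}) r X X'" by (rule det_event[OF assms])
    have sp: "\<omega> \<in> space ?P" using w by blast
    show "\<omega> \<in> ?E" unfolding mem_Collect_eq using sp d by (rule conjI)
  qed
  have "1 - (real K + 1) * (1 - s ^ CARD('d)) ^ n = 1 - (\<Sum>j\<in>{..K}. measure ?P (Bad j))"
    using mB by simp
  also have "\<dots> \<le> 1 - measure ?P (\<Union>j\<in>{..K}. Bad j)"
  proof -
    have "measure ?P (\<Union>j\<in>{..K}. Bad j) \<le> (\<Sum>j\<in>{..K}. measure ?P (Bad j))"
      by (rule P.finite_measure_subadditive_finite) (auto simp: Bsets)
    then show ?thesis by linarith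
  qed
  also have "\<dots> = measure ?P (space ?P - (\<Union>j\<in>{..K}. Bad j))"
    using Bsets by (subst P.prob_compl) (auto simp del: UN_simps)
  also have "\<dots> \<le> measure ?P ?E"
    using sub Esets by (intro P.finite_measure_mono) auto
  finally show ?thesis .
qed

lemma powr_inv_pow:
  assumes "x > 0" "D \<ge> 1"
  shows "(x powr (1 / real D)) ^ D = x"
proof -
  have "(x powr (1 / real D)) ^ D = (x powr (1 / real D)) powr real D"
    using assms by (simp add: powr_realpow)
  also have "\<dots> = x powr (1 / real D * real D)" by (simp add: powr_powr)
  also have "\<dots> = x" using assms by simp
  finally show ?thesis .
qed

lemma one_minus_pow_le_exp:
  fixes x :: real assumes "0 \<le> x" "x \<le> 1"
  shows "(1 - x) ^ n \<le> exp (- (real n * x))"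
proof -
  have "(1 - x) ^ n \<le> exp (- x) ^ n"
    using assms exp_ge_add_one_self[of "-x"] by (intro power_mono) auto
  also have "\<dots> = exp (- (real n * x))" by (simp add: exp_of_nat_mult[symmetric])
  finally show ?thesis .
qed

lemma key_bound:
  fixes D K :: nat and \<delta> s \<rho> fn rn c :: real and n :: nat
  assumes D: "D \<ge> 1" and \<delta>: "0 < \<delta>" "\<delta> \<le> 1"
    and n3: "n \<ge> 3" and f1: "fn \<ge> 1" and fc: "c * fn \<ge> 2"
    and c_def: "c = (\<delta> / (8 * real D)) ^ D"
    and rn: "rn = fn * (ln (real n) / real n) powr (1 / real D)"
    and \<rho>: "\<rho> = min rn 1"
    and K_def: "K = nat \<lceil>2 * real D / \<rho>\<rceil>"
    and s_def: "s = \<delta> * \<rho> / (8 * real D)"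
  shows "K > 0 \<and> s \<ge> 0 \<and> s * (real K + 1) < \<delta> \<and> real D * (1 / real K + s) \<le> rn \<and>
         real D * s \<le> rn / 2 \<and> s \<le> 1 \<and>
         (real K + 1) * (1 - s ^ D) ^ n \<le> 4 * real D * exp (- (c * real n)) + 4 * real D / real n"
proof -
  have Dp: "real D \<ge> 1" using D by simp
  have ln1: "ln (real n) \<ge> 1"
  proof -
    have "exp 1 \<le> (3::real)" using exp_le by simp
    also have "\<dots> \<le> real n" using n3 by simp
    finally have "exp 1 \<le> real n" .
    then show ?thesis using n3 by (subst ln_ge_iff) auto
  qed
  have q0: "ln (real n) / real n > 0" using ln1 n3 by simp
  have pw0: "(ln (real n) / real n) powr (1 / real D) > 0" using q0 by (simp only: powr_gt_zero)
  have rpos: "rn > 0" using rn f1 pw0 by simp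
  have \<rho>0: "\<rho> > 0" "\<rho> \<le> 1" "\<rho> \<le> rn" using \<rho> rpos by auto
  have Kge: "real K \<ge> 2 * real D / \<rho>" using K_def by linarith
  have Kle: "real K \<le> 2 * real D / \<rho> + 1" using K_def \<rho>0 Dp
    by (simp add: of_nat_nat)
  have t1: "2 * real D / \<rho> \<ge> 2 * real D" using \<rho>0 Dp by (simp add: field_simps)
  have Kpos: "real K > 0" using Kge t1 Dp by linarith
  have s0: "s \<ge> 0" using s_def \<delta> \<rho>0 Dp by simp
  have K1: "real K + 1 \<le> 4 * real D / \<rho>"
  proof -
    have "2 \<le> 2 * real D / \<rho>" using t1 Dp by linarith
    moreover have "4 * real D / \<rho> = 2 * (2 * real D / \<rho>)" by simp
    ultimately show ?thesis using Kle by linarith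
  qed
  have sK: "s * (real K + 1) \<le> \<delta> / 2"
  proof -
    have "s * (real K + 1) \<le> s * (4 * real D / \<rho>)" using K1 s0 by (rule mult_left_mono)
    also have "\<dots> = \<delta> / 2" using \<rho>0 Dp s_def by (simp add: field_simps)
    finally show ?thesis .
  qed
  have DK: "real D / real K \<le> \<rho> / 2"
  proof -
    have "real D / real K \<le> real D / (2 * real D / \<rho>)"
      using Kge Kpos Dp \<rho>0 by (intro divide_left_mono) auto
    also have "\<dots> = \<rho> / 2" using Dp \<rho>0 by (simp add: field_simps)
    finally show ?thesis .
  qed
  have Ds: "real D * s \<le> \<rho> / 8" using s_def \<delta> \<rho>0 Dp by (simp add: field_simps)
  have c1: "real D * (1 / real K + s) \<le> rn" using DK Ds \<rho>0 by (simp add: algebra_simps)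
  have c2: "real D * s \<le> rn / 2" using Ds \<rho>0 by linarith
  have s1: "s \<le> 1"
  proof -
    have "\<delta> * \<rho> \<le> 1" using \<delta> \<rho>0 by (intro mult_le_one) auto
    moreover have "s \<le> \<delta> * \<rho>" unfolding s_def using Dp \<delta> \<rho>0 by (simp add: divide_le_eq)
    ultimately show ?thesis by linarith
  qed
  have c0: "c > 0" using c_def \<delta> Dp by simp
  have seq: "s = (\<delta> / (8 * real D)) * \<rho>" unfolding s_def by simp
  have sD: "s ^ D = c * \<rho> ^ D" unfolding seq c_def by (rule power_mult_distrib)
  have sD1: "s ^ D \<le> 1" using s0 s1 by (simp add: power_le_one)
  have "(1 - s ^ D) ^ n \<le> exp (- (real n * s ^ D))"
    by (rule one_minus_pow_le_exp) (simp_all add: s0 sD1)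
  then have ex: "(1 - s ^ D) ^ n \<le> exp (- (real n * (c * \<rho> ^ D)))" by (simp only: sD)
  have main: "(real K + 1) * (1 - s ^ D) ^ n \<le> 4 * real D / \<rho> * exp (- (real n * (c * \<rho> ^ D)))"
  proof (rule mult_mono[OF K1 ex])
    show "0 \<le> 4 * real D / \<rho>" using \<rho>0 by simp
    show "0 \<le> (1 - s ^ D) ^ n" using sD1 by simp
  qed
  have bound: "4 * real D / \<rho> * exp (- (real n * (c * \<rho> ^ D)))
       \<le> 4 * real D * exp (- (c * real n)) + 4 * real D / real n"
  proof (cases "rn \<ge> 1")
    case True
    then have "\<rho> = 1" using \<rho> by simp
    then show ?thesis using n3 by (simp add: algebra_simps)
  next
    case False
    then have r: "\<rho> = rn" using \<rho> by simp
    have rD: "rn ^ D = fn ^ D * (ln (real n) / real n)"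
      using rn powr_inv_pow[OF q0 D] by (simp add: power_mult_distrib)
    have fD: "fn ^ D \<ge> fn" using power_increasing[of 1 D fn] f1 D by simp
    have fD1: "fn ^ D \<ge> 1" using f1 by simp
    have "rn ^ D \<ge> 1 / real n"
    proof -
      have "1 / real n \<le> ln (real n) / real n" using ln1 n3 by (simp add: divide_right_mono)
      also have "\<dots> = 1 * (ln (real n) / real n)" by simp
      also have "\<dots> \<le> fn ^ D * (ln (real n) / real n)" using fD1 q0 by (intro mult_right_mono) auto
      finally show ?thesis using rD by simp
    qed
    moreover have "rn ^ D \<le> rn" using power_decreasing[of 1 D rn] False rpos D by simp
    ultimately have "1 / real n \<le> rn" by linarith
    then have inv: "1 / rn \<le> real n" using rpos n3 by (simp add: field_simps)
    have "real n * (c * rn ^ D) = c * fn ^ D * ln (real n)" using rD n3 by (simp add: field_simps)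
    also have "\<dots> \<ge> 2 * ln (real n)"
    proof -
      have "c * fn ^ D \<ge> c * fn" using fD c0 by simp
      then show ?thesis using fc ln1 by (intro mult_right_mono) auto
    qed
    finally have "exp (- (real n * (c * rn ^ D))) \<le> exp (- (2 * ln (real n)))" by simp
    also have "\<dots> = 1 / (real n) ^ 2"
    proof -
      have "2 * ln (real n) = ln ((real n) ^ 2)" using n3 by (simp add: ln_realpow)
      then have "exp (2 * ln (real n)) = (real n) ^ 2" using n3 by simp
      then show ?thesis by (simp add: exp_minus inverse_eq_divide)
    qed
    finally have e2: "exp (- (real n * (c * rn ^ D))) \<le> 1 / (real n) ^ 2" .
    have "4 * real D / rn * exp (- (real n * (c * rn ^ D))) \<le> 4 * real D * real n * (1 / (real n) ^ 2)"
    proof -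
      have "4 * real D / rn = 4 * real D * (1 / rn)" by simp
      also have "\<dots> \<le> 4 * real D * real n" using inv Dp by (intro mult_left_mono) auto
      finally show ?thesis using e2 by (intro mult_mono) auto
    qed
    also have "\<dots> = 4 * real D / real n" using n3 by (simp add: power2_eq_square field_simps)
    finally have "4 * real D / rn * exp (- (real n * (c * rn ^ D))) \<le> 4 * real D / real n" .
    moreover have "0 \<le> 4 * real D * exp (- (c * real n))" by simp
    ultimately show ?thesis unfolding r by linarith
  qed
  have "K > 0" using Kpos by simp
  moreover have "s * (real K + 1) < \<delta>" using sK \<delta> by linarith
  moreover have "(real K + 1) * (1 - s ^ D) ^ n \<le> 4 * real D * exp (- (c * real n)) + 4 * real D / real n"
    using main bound by linarith
  ultimately show ?thesis using s0 c1 c2 s1 by blast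
qed


lemma g_lim:
  fixes D c :: real assumes "c > 0"
  shows "(\<lambda>n. 4 * D * exp (- (c * real n)) + 4 * D / real n) \<longlonglongrightarrow> 0"
proof -
  have e: "(\<lambda>n. exp (- (c * real n))) = (\<lambda>n. exp (- c) ^ n)"
    by (rule ext) (simp add: exp_of_nat_mult[symmetric] algebra_simps)
  have "(\<lambda>n. exp (- c) ^ n) \<longlonglongrightarrow> 0" using assms by (intro LIMSEQ_power_zero) simp
  then have l1: "(\<lambda>n. exp (- (c * real n))) \<longlonglongrightarrow> 0" unfolding e .
  have l2: "(\<lambda>n. 1 / real n) \<longlonglongrightarrow> 0" by (rule lim_1_over_n)
  have "(\<lambda>n. 4 * D * exp (- (c * real n)) + 4 * D * (1 / real n)) \<longlonglongrightarrow> 4 * D * 0 + 4 * D * 0"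
    by (intro tendsto_intros l1 l2)
  then show ?thesis by simp
qed

theorem lemma7:
  fixes f :: "nat \<Rightarrow> real" and r :: "nat \<Rightarrow> real"
    and q q' :: "real ^ 'd" and \<delta> :: real
  assumes d2: "CARD('d) \<ge> 2"
    and f_lim: "filterlim f at_top sequentially"
    and r_def: "\<And>n. r n = f n * (ln (real n) / real n) powr (1 / real CARD('d))"
    and q_in: "q \<in> unit_cube" and q'_in: "q' \<in> unit_cube"
    and \<delta>_pos: "\<delta> > 0" and qq': "vle_delta \<delta> q q'"
  shows "(\<lambda>n. measure (sample n :: (nat \<Rightarrow> real ^ 'd) measure)
            {\<omega> \<in> space (sample n).
               \<exists>X \<in> \<omega> ` {..<n}. \<exists>X' \<in> \<omega> ` {..<n}.
                 dist X q \<le> r n / 2 \<and> dist X' q' \<le> r n / 2 \<and>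
                 vle q X \<and> vle X' q' \<and>
                 monotone_connected (\<omega> ` {..<n}) (r n) X X'})
         \<longlonglongrightarrow> 1"
proof -
  define D where "D = CARD('d)"
  have D1: "D \<ge> 1" using d2 D_def by simp
  have hv: "\<delta> \<le> q'$i - q$i" for i
  proof -
    have "Min (range (\<lambda>i. q' $ i - q $ i)) \<le> q'$i - q$i" by (rule Min_le) auto
    then show ?thesis using qq' unfolding vle_delta_def by simp
  qed
  have \<delta>1: "\<delta> \<le> 1"
  proof -
    have "0 \<le> q $ undefined" "q' $ undefined \<le> 1" using q_in q'_in by (auto simp: unit_cube_def)
    then show ?thesis using hv[of undefined] by linarith
  qed
  define c where "c = (\<delta> / (8 * real D)) ^ D"
  have c0: "c > 0" unfolding c_def using \<delta>_pos D1 by simp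
  define g where "g n = 4 * real D * exp (- (c * real n)) + 4 * real D / real n" for n
  let ?m = "\<lambda>n. measure (sample n :: (nat \<Rightarrow> real ^ 'd) measure)
            {\<omega> \<in> space (sample n).
               \<exists>X \<in> \<omega> ` {..<n}. \<exists>X' \<in> \<omega> ` {..<n}.
                 dist X q \<le> r n / 2 \<and> dist X' q' \<le> r n / 2 \<and>
                 vle q X \<and> vle X' q' \<and>
                 monotone_connected (\<omega> ` {..<n}) (r n) X X'}"
  have ev1: "eventually (\<lambda>n. max 1 (2 / c) \<le> f n) sequentially"
    using f_lim unfolding filterlim_at_top by blast
  have ev: "eventually (\<lambda>n. 1 - g n \<le> ?m n) sequentially"
    using ev1 eventually_ge_at_top[of 3]
  proof eventually_elim
    case (elim n)
    have f1: "f n \<ge> 1" using elim by simp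
    have fc: "c * f n \<ge> 2"
    proof -
      have "2 / c \<le> f n" using elim by simp
      then show ?thesis using c0 by (simp add: field_simps)
    qed
    define \<rho> where "\<rho> = min (r n) 1"
    define K where "K = nat \<lceil>2 * real D / \<rho>\<rceil>"
    define s where "s = \<delta> * \<rho> / (8 * real D)"
    have kb: "K > 0 \<and> s \<ge> 0 \<and> s * (real K + 1) < \<delta> \<and> real D * (1 / real K + s) \<le> r n \<and>
         real D * s \<le> r n / 2 \<and> s \<le> 1 \<and>
         (real K + 1) * (1 - s ^ D) ^ n \<le> 4 * real D * exp (- (c * real n)) + 4 * real D / real n"
      by (rule key_bound[OF D1 \<delta>_pos \<delta>1 elim(2) f1 fc c_def _ \<rho>_def K_def s_def])
        (simp add: r_def D_def)
    have hv2: "\<And>i. s * (real K + 1) < q'$i - q$i" using kb hv less_le_trans by blast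
    have "?m n \<ge> 1 - (real K + 1) * (1 - s ^ CARD('d)) ^ n"
      by (rule prob_lower[OF q_in q'_in hv2]) (use kb D_def in auto)
    then show ?case using kb unfolding g_def D_def by linarith
  qed
  have up: "eventually (\<lambda>n. ?m n \<le> 1) sequentially"
  proof (rule always_eventually, rule allI)
    fix n
    interpret P: prob_space "sample n :: (nat \<Rightarrow> real ^ 'd) measure" by (rule prob_sample)
    show "?m n \<le> 1" by (rule P.prob_le_1)
  qed
  have "(\<lambda>n. 1 - g n) \<longlonglongrightarrow> 1 - 0"
    unfolding g_def by (intro tendsto_diff tendsto_const g_lim c0)
  then have lo: "(\<lambda>n. 1 - g n) \<longlonglongrightarrow> 1" by simp
  show ?thesis by (rule tendsto_sandwich[OF ev up lo tendsto_const])
qed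

end
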